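(* Let $\mathcal P=\langle F,R\rangle$ be a program and $H$ an interpretation (hypothesis). If $H_1$ and $H_2$ are interpretations with $H_1\le H$, $H_2\le H$, and both $H_1$ and $H_2$ are sound with respect to $\mathcal P$, then $H_1\oplus H_2$ is sound with respect to $\mathcal P$.
   Context: Let $\langle \mathcal{B},\le_t,\le_k\rangle$ be a complete, infinitely distributive bilattice with negation satisfying the infinitary interlacing conditions; $\wedge,\vee$ are meet/join for $\le_t$, $\otimes,\oplus$ meet/join for $\le_k$, $\mathcal U$ is the bottom of $\le_k$. A closed formula is built from ground literals and elements of $\mathcal B$ using $\wedge,\vee,\otimes,\oplus,\exists,\forall$ (quantifiers over closed terms). A program $\mathcal P=\langle F,R\rangle$ consists of a function $F$ from the Herbrand base $\mathcal{HB}_{\mathcal P}$ to $\mathcal B$ (the facts) and a finite set $R$ of ground clauses $A\leftarrow B$ ($A$ a ground atom, $B$ a closed formula), each ground atom being the head of at most one clause; $Head(\mathcal P)$ is the set of heads. An interpretation is a function $I:\mathcal{HB}_{\mathcal P}\to\mathcal B$, extended to closed formulas homomorphically ($I(\neg A)=\neg I(A)$, $I(X\wedge Y)=I(X)\wedge I(Y)$ etc., $\exists$ as $\bigvee$ and $\forall$ as $\bigwedge$ over closed instances). Operations on interpretations are pointwise, e.g. $(I\oplus J)(A)=I(A)\oplus J(A)$. $I,J$ are compatible if for every $A$, $I(A)\neq\mathcal U$ and $J(A)\neq\mathcal U$ imply $I(A)=J(A)$. $I\le J$ means: $I(A)\neq\mathcal U$ implies $I(A)=J(A)$ for all $A$.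 The restriction $I_{/S}$ to a set $S$ of atoms is $I$ on $S$ and $\mathcal U$ elsewhere. For a closed formula $B$, $B\equiv_I\alpha$ means $J(B)=\alpha$ for all $J$ with $I\le J$. The immediate consequence operator is $T_R(I)(A)=\alpha$ if there is a clause $A\leftarrow B$ in $R$ with $B\equiv_I\alpha$, and $T_R(I)(A)=\mathcal U$ otherwise. An interpretation $H$ is sound with respect to $\mathcal P$ if $F$ and $H$ are compatible and $H_{/Head(\mathcal P)}\le T_R(F\oplus H)$. *)

theory Defs
  imports Main
begin

record 'v bilat =
  le_t :: "'v \<Rightarrow> 'v \<Rightarrow> bool"
  le_k :: "'v \<Rightarrow> 'v \<Rightarrow> bool"
  bneg :: "'v \<Rightarrow> 'v"

definition is_lub :: "('v \<Rightarrow> 'v \<Rightarrow> bool) \<Rightarrow> 'v set \<Rightarrow> 'v \<Rightarrow> bool" where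
  "is_lub le S x \<longleftrightarrow> (\<forall>s\<in>S. le s x) \<and> (\<forall>y. (\<forall>s\<in>S. le s y) \<longrightarrow> le x y)"

definition is_glb :: "('v \<Rightarrow> 'v \<Rightarrow> bool) \<Rightarrow> 'v set \<Rightarrow> 'v \<Rightarrow> bool" where
  "is_glb le S x \<longleftrightarrow> (\<forall>s\<in>S. le x s) \<and> (\<forall>y. (\<forall>s\<in>S. le y s) \<longrightarrow> le y x)"

definition partial_order_on_type :: "('v \<Rightarrow> 'v \<Rightarrow> bool) \<Rightarrow> bool" where
  "partial_order_on_type le \<longleftrightarrow> (\<forall>x. le x x) \<and> (\<forall>x y. le x y \<and> le y x \<longrightarrow> x = y)
     \<and> (\<forall>x y z. le x y \<and> le y z \<longrightarrow> le x z)"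

definition Meet_t :: "'v bilat \<Rightarrow> 'v set \<Rightarrow> 'v" where
  "Meet_t L S = (THE x. is_glb (le_t L) S x)"
definition Join_t :: "'v bilat \<Rightarrow> 'v set \<Rightarrow> 'v" where
  "Join_t L S = (THE x. is_lub (le_t L) S x)"
definition Meet_k :: "'v bilat \<Rightarrow> 'v set \<Rightarrow> 'v" where
  "Meet_k L S = (THE x. is_glb (le_k L) S x)"
definition Join_k :: "'v bilat \<Rightarrow> 'v set \<Rightarrow> 'v" where
  "Join_k L S = (THE x. is_lub (le_k L) S x)"

definition meet_t :: "'v bilat \<Rightarrow> 'v \<Rightarrow> 'v \<Rightarrow> 'v" where "meet_t L x y = Meet_t L {x, y}"
definition join_t :: "'v bilat \<Rightarrow> 'v \<Rightarrow> 'v \<Rightarrow> 'v" where "join_t L x y = Join_t L {x, y}"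
definition meet_k :: "'v bilat \<Rightarrow> 'v \<Rightarrow> 'v \<Rightarrow> 'v" where "meet_k L x y = Meet_k L {x, y}"
definition join_k :: "'v bilat \<Rightarrow> 'v \<Rightarrow> 'v \<Rightarrow> 'v" where "join_k L x y = Join_k L {x, y}"

definition bU :: "'v bilat \<Rightarrow> 'v" where "bU L = Join_k L {}"

definition bin_ops :: "'v bilat \<Rightarrow> ('v \<Rightarrow> 'v \<Rightarrow> 'v) list" where
  "bin_ops L = [meet_t L, join_t L, meet_k L, join_k L]"
definition inf_ops :: "'v bilat \<Rightarrow> ('v set \<Rightarrow> 'v) list" where
  "inf_ops L = [Meet_t L, Join_t L, Meet_k L, Join_k L]"

definition bilattice :: "'v bilat \<Rightarrow> bool" where
  "bilattice L \<longleftrightarrow>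
     \<comment> \<open>two complete lattice orders\<close>
     partial_order_on_type (le_t L) \<and> partial_order_on_type (le_k L) \<and>
     (\<forall>S. \<exists>x. is_lub (le_t L) S x) \<and> (\<forall>S. \<exists>x. is_glb (le_t L) S x) \<and>
     (\<forall>S. \<exists>x. is_lub (le_k L) S x) \<and> (\<forall>S. \<exists>x. is_glb (le_k L) S x) \<and>
     \<comment> \<open>negation\<close>
     (\<forall>x y. le_t L x y \<longrightarrow> le_t L (bneg L y) (bneg L x)) \<and>
     (\<forall>x y. le_k L x y \<longrightarrow> le_k L (bneg L x) (bneg L y)) \<and>
     (\<forall>x. bneg L (bneg L x) = x) \<and>
     \<comment> \<open>infinitary interlacing: each infinitary operation is monotone w.r.t. both
        orders (families are represented by sets of pairs (a_i, b_i))\<close>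
     (\<forall>Op\<in>set (inf_ops L). \<forall>P.
        ((\<forall>p\<in>P. le_t L (fst p) (snd p)) \<longrightarrow> le_t L (Op (fst ` P)) (Op (snd ` P))) \<and>
        ((\<forall>p\<in>P. le_k L (fst p) (snd p)) \<longrightarrow> le_k L (Op (fst ` P)) (Op (snd ` P)))) \<and>
     \<comment> \<open>infinite distributivity: every binary operation distributes over every other
        infinitary operation (for nonempty families)\<close>
     (\<forall>i<4. \<forall>j<4. i \<noteq> j \<longrightarrow> (\<forall>a S. S \<noteq> {} \<longrightarrow>
        (bin_ops L ! i) a ((inf_ops L ! j) S) = (inf_ops L ! j) ((\<lambda>s. (bin_ops L ! i) a s) ` S)))"

text \<open>Closed formulas over ground atoms \<open>'a\<close> (the Herbrand base), closed terms \<open>'t\<close>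
  and truth values \<open>'v\<close>. A quantified formula \<open>\<exists>x. B(x)\<close> is represented by the
  function mapping each closed term to the corresponding closed instance.\<close>
datatype ('a, 't, 'v) form =
    Pos 'a
  | Neg 'a
  | Val 'v
  | FAnd "('a, 't, 'v) form" "('a, 't, 'v) form"
  | FOr "('a, 't, 'v) form" "('a, 't, 'v) form"
  | FOtimes "('a, 't, 'v) form" "('a, 't, 'v) form"
  | FOplus "('a, 't, 'v) form" "('a, 't, 'v) form"
  | FEx "'t \<Rightarrow> ('a, 't, 'v) form"
  | FAll "'t \<Rightarrow> ('a, 't, 'v) form"

primrec eval :: "'v bilat \<Rightarrow> ('a \<Rightarrow> 'v) \<Rightarrow> ('a, 't, 'v) form \<Rightarrow> 'v" where
  "eval L I (Pos A) = I A"
| "eval L I (Neg A) = bneg L (I A)"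
| "eval L I (Val v) = v"
| "eval L I (FAnd X Y) = meet_t L (eval L I X) (eval L I Y)"
| "eval L I (FOr X Y) = join_t L (eval L I X) (eval L I Y)"
| "eval L I (FOtimes X Y) = meet_k L (eval L I X) (eval L I Y)"
| "eval L I (FOplus X Y) = join_k L (eval L I X) (eval L I Y)"
| "eval L I (FEx f) = Join_t L (range (\<lambda>t. eval L I (f t)))"
| "eval L I (FAll f) = Meet_t L (range (\<lambda>t. eval L I (f t)))"

text \<open>A program is a pair (F, R): facts F and a finite set of ground clauses (head, body),
  each ground atom being the head of at most one clause.\<close>
definition program :: "('a \<Rightarrow> 'v) \<times> ('a \<times> ('a, 't, 'v) form) set \<Rightarrow> bool" where
  "program P \<longleftrightarrow> finite (snd P) \<and>
     (\<forall>c1\<in>snd P. \<forall>c2\<in>snd P. fst c1 = fst c2 \<longrightarrow> c1 = c2)"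

definition Head :: "('a \<Rightarrow> 'v) \<times> ('a \<times> ('a, 't, 'v) form) set \<Rightarrow> 'a set" where
  "Head P = fst ` snd P"

definition oplus_i :: "'v bilat \<Rightarrow> ('a \<Rightarrow> 'v) \<Rightarrow> ('a \<Rightarrow> 'v) \<Rightarrow> ('a \<Rightarrow> 'v)" where
  "oplus_i L I J = (\<lambda>A. join_k L (I A) (J A))"

definition compatible :: "'v bilat \<Rightarrow> ('a \<Rightarrow> 'v) \<Rightarrow> ('a \<Rightarrow> 'v) \<Rightarrow> bool" where
  "compatible L I J \<longleftrightarrow> (\<forall>A. I A \<noteq> bU L \<and> J A \<noteq> bU L \<longrightarrow> I A = J A)"

definition le_interp :: "'v bilat \<Rightarrow> ('a \<Rightarrow> 'v) \<Rightarrow> ('a \<Rightarrow> 'v) \<Rightarrow> bool" where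
  "le_interp L I J \<longleftrightarrow> (\<forall>A. I A \<noteq> bU L \<longrightarrow> I A = J A)"

definition restrict :: "'v bilat \<Rightarrow> ('a \<Rightarrow> 'v) \<Rightarrow> 'a set \<Rightarrow> ('a \<Rightarrow> 'v)" where
  "restrict L I S = (\<lambda>A. if A \<in> S then I A else bU L)"

definition fequiv :: "'v bilat \<Rightarrow> ('a \<Rightarrow> 'v) \<Rightarrow> ('a, 't, 'v) form \<Rightarrow> 'v \<Rightarrow> bool" where
  "fequiv L I B \<alpha> \<longleftrightarrow> (\<forall>J. le_interp L I J \<longrightarrow> eval L J B = \<alpha>)"

definition T_R :: "'v bilat \<Rightarrow> ('a \<times> ('a, 't, 'v) form) set \<Rightarrow> ('a \<Rightarrow> 'v) \<Rightarrow> ('a \<Rightarrow> 'v)" where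
  "T_R L R I = (\<lambda>A. if (\<exists>B \<alpha>. (A, B) \<in> R \<and> fequiv L I B \<alpha>)
                     then (THE \<alpha>. \<exists>B. (A, B) \<in> R \<and> fequiv L I B \<alpha>)
                     else bU L)"

definition sound :: "'v bilat \<Rightarrow> ('a \<Rightarrow> 'v) \<times> ('a \<times> ('a, 't, 'v) form) set \<Rightarrow> ('a \<Rightarrow> 'v) \<Rightarrow> bool" where
  "sound L P H \<longleftrightarrow> compatible L (fst P) H \<and>
     le_interp L (restrict L H (Head P)) (T_R L (snd P) (oplus_i L (fst P) H))"

end

theory Submission
  imports Defs
begin

lemma bil_po: "bilattice L \<Longrightarrow> partial_order_on_type (le_k L)"
  apply (unfold bilattice_def)
  apply (elim conjE)
  apply assumption
  done

lemma bil_lub: "bilattice L \<Longrightarrow> \<exists>x. is_lub (le_k L) S x"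
  apply (unfold bilattice_def)
  apply (elim conjE)
  apply (erule_tac P="\<lambda>S. Ex (is_lub (le_k L) S)" in allE)
  apply assumption
  done

lemma po_refl: "partial_order_on_type le \<Longrightarrow> le x x"
  unfolding partial_order_on_type_def by blast

lemma lub_unique:
  assumes "partial_order_on_type le" "is_lub le S x" "is_lub le S y"
  shows "x = y"
  using assms unfolding partial_order_on_type_def is_lub_def by blast

lemma Join_k_eq:
  assumes "bilattice L" "is_lub (le_k L) S x"
  shows "Join_k L S = x"
proof -
  have po: "partial_order_on_type (le_k L)" using bil_po[OF assms(1)] .
  show ?thesis unfolding Join_k_def
    by (rule the_equality, rule assms(2), metis lub_unique po assms(2))
qed

lemma bU_lub:
  assumes "bilattice L"
  shows "is_lub (le_k L) {} (bU L)"
proof -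
  obtain x where x: "is_lub (le_k L) {} x" using bil_lub[OF assms] by blast
  have "Join_k L {} = x" by (rule Join_k_eq[OF assms x])
  then show ?thesis using x unfolding bU_def by simp
qed

lemma bU_le:
  assumes "bilattice L" shows "le_k L (bU L) y"
  using bU_lub[OF assms] unfolding is_lub_def by simp

lemma join_U1:
  assumes "bilattice L" shows "join_k L (bU L) b = b"
proof -
  have po: "partial_order_on_type (le_k L)" using bil_po[OF assms(1)] .
  have "is_lub (le_k L) {bU L, b} b"
    using po_refl[OF po] bU_le[OF assms] unfolding is_lub_def by simp
  then show ?thesis unfolding join_k_def by (rule Join_k_eq[OF assms])
qed

lemma join_U2:
  assumes "bilattice L" shows "join_k L a (bU L) = a"
proof -
  have po: "partial_order_on_type (le_k L)" using bil_po[OF assms(1)] .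
  have "is_lub (le_k L) {a, bU L} a"
    using po_refl[OF po] bU_le[OF assms] unfolding is_lub_def by simp
  then show ?thesis unfolding join_k_def by (rule Join_k_eq[OF assms])
qed

lemma join_idem:
  assumes "bilattice L" shows "join_k L a a = a"
proof -
  have po: "partial_order_on_type (le_k L)" using bil_po[OF assms(1)] .
  have "is_lub (le_k L) {a, a} a"
    using po_refl[OF po] unfolding is_lub_def by simp
  then show ?thesis unfolding join_k_def by (rule Join_k_eq[OF assms])
qed

lemma join_compat:
  assumes "bilattice L" "a = bU L \<or> b = bU L \<or> a = b"
  shows "join_k L a b = (if a = bU L then b else a)"
  using assms join_U1[OF assms(1)] join_U2[OF assms(1)] join_idem[OF assms(1)] by auto

lemma le_interp_trans:
  "le_interp L I J \<Longrightarrow> le_interp L J K \<Longrightarrow> le_interp L I K"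
  unfolding le_interp_def by fastforce

lemma fequiv_mono:
  "fequiv L I B \<alpha> \<Longrightarrow> le_interp L I I' \<Longrightarrow> fequiv L I' B \<alpha>"
  unfolding fequiv_def using le_interp_trans by blast

lemma fequiv_unique:
  assumes "fequiv L I B \<alpha>" "fequiv L I B \<beta>" shows "\<alpha> = \<beta>"
proof -
  have "le_interp L I I" unfolding le_interp_def by simp
  then show ?thesis using assms unfolding fequiv_def by blast
qed

lemma T_R_val:
  assumes "program P" "(A, B) \<in> snd P" "fequiv L I B \<alpha>"
  shows "T_R L (snd P) I A = \<alpha>"
proof -
  have pr: "\<forall>c1\<in>snd P. \<forall>c2\<in>snd P. fst c1 = fst c2 \<longrightarrow> c1 = c2"
    using assms(1) unfolding program_def by (elim conjE)
  have u: "B' = B" if "(A, B') \<in> snd P" for B'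
  proof -
    have "(A, B') = (A, B)" using pr that assms(2) by fastforce
    then show ?thesis by simp
  qed
  have th: "(THE \<alpha>. \<exists>B. (A, B) \<in> snd P \<and> fequiv L I B \<alpha>) = \<alpha>"
  proof (rule the_equality)
    show "\<exists>B. (A, B) \<in> snd P \<and> fequiv L I B \<alpha>" using assms(2,3) by blast
  next
    fix \<beta> assume "\<exists>B'. (A, B') \<in> snd P \<and> fequiv L I B' \<beta>"
    then obtain B' where "(A, B') \<in> snd P" "fequiv L I B' \<beta>" by blast
    then have "fequiv L I B \<beta>" using u by simp
    then show "\<beta> = \<alpha>" by (rule fequiv_unique[OF _ assms(3)])
  qed
  have ex: "\<exists>B \<alpha>. (A, B) \<in> snd P \<and> fequiv L I B \<alpha>" using assms(2,3) by blast
  show ?thesis unfolding T_R_def using ex th by simp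
qed

lemma T_R_mono:
  assumes "program P" "le_interp L I I'" "T_R L (snd P) I A \<noteq> bU L"
  shows "T_R L (snd P) I' A = T_R L (snd P) I A"
proof -
  have "\<exists>B \<alpha>. (A, B) \<in> snd P \<and> fequiv L I B \<alpha>"
  proof (rule ccontr)
    assume n: "\<not> ?thesis"
    have "T_R L (snd P) I A = bU L" unfolding T_R_def by (rule if_not_P[OF n])
    then show False using assms(3) by simp
  qed
  then obtain B \<alpha> where b: "(A, B) \<in> snd P" "fequiv L I B \<alpha>" by blast
  have "T_R L (snd P) I A = \<alpha>" using T_R_val[OF assms(1) b] .
  moreover have "T_R L (snd P) I' A = \<alpha>"
    using T_R_val[OF assms(1) b(1) fequiv_mono[OF b(2) assms(2)]] .
  ultimately show ?thesis by simp
qed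

theorem mainTheorem2:
  fixes L :: "'v bilat"
    and P :: "('a \<Rightarrow> 'v) \<times> ('a \<times> ('a, 't, 'v) form) set"
    and H H1 H2 :: "'a \<Rightarrow> 'v"
  assumes "bilattice L"
    and "program P"
    and "le_interp L H1 H"
    and "le_interp L H2 H"
    and "sound L P H1"
    and "sound L P H2"
  shows "sound L P (oplus_i L H1 H2)"
proof -
  let ?U = "bU L"
  let ?F = "fst P"
  have c12: "\<And>x. H1 x = ?U \<or> H2 x = ?U \<or> H1 x = H2 x"
    using assms(3,4) unfolding le_interp_def by metis
  have h12: "\<And>x. oplus_i L H1 H2 x = (if H1 x = ?U then H2 x else H1 x)"
    unfolding oplus_i_def using join_compat[OF assms(1) c12] by blast
  have cF1: "compatible L ?F H1" and cF2: "compatible L ?F H2"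
    using assms(5,6) unfolding sound_def by auto
  have cF: "\<And>x G. compatible L ?F G \<Longrightarrow> ?F x = ?U \<or> G x = ?U \<or> ?F x = G x"
    unfolding compatible_def by metis
  have fo: "\<And>x G. compatible L ?F G \<Longrightarrow> oplus_i L ?F G x = (if ?F x = ?U then G x else ?F x)"
    unfolding oplus_i_def using join_compat[OF assms(1) cF] by blast
  have comp: "compatible L ?F (oplus_i L H1 H2)"
    unfolding compatible_def
  proof (intro allI impI)
    fix x assume "?F x \<noteq> ?U \<and> oplus_i L H1 H2 x \<noteq> ?U"
    then show "?F x = oplus_i L H1 H2 x" using cF1 cF2 h12[of x] unfolding compatible_def
      by (cases "H1 x = ?U") auto
  qed
  have mon1: "le_interp L (oplus_i L ?F H1) (oplus_i L ?F (oplus_i L H1 H2))"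
    unfolding le_interp_def
  proof (intro allI impI)
    fix x assume a: "oplus_i L ?F H1 x \<noteq> ?U"
    show "oplus_i L ?F H1 x = oplus_i L ?F (oplus_i L H1 H2) x"
      using a fo[OF cF1, of x] fo[OF comp, of x] h12[of x] cF[OF cF1, of x] cF[OF cF2, of x] c12[of x]
      by (auto split: if_splits)
  qed
  have mon2: "le_interp L (oplus_i L ?F H2) (oplus_i L ?F (oplus_i L H1 H2))"
    unfolding le_interp_def
  proof (intro allI impI)
    fix x assume a: "oplus_i L ?F H2 x \<noteq> ?U"
    show "oplus_i L ?F H2 x = oplus_i L ?F (oplus_i L H1 H2) x"
      using a fo[OF cF2, of x] fo[OF comp, of x] h12[of x] cF[OF cF1, of x] cF[OF cF2, of x] c12[of x]
      by (auto split: if_splits)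
  qed
  have s1: "\<And>x. x \<in> Head P \<Longrightarrow> H1 x \<noteq> ?U \<Longrightarrow> H1 x = T_R L (snd P) (oplus_i L ?F H1) x"
  proof -
    fix x assume "x \<in> Head P" "H1 x \<noteq> ?U"
    then have "restrict L H1 (Head P) x \<noteq> ?U" by (simp add: restrict_def)
    then have "restrict L H1 (Head P) x = T_R L (snd P) (oplus_i L ?F H1) x"
      using assms(5) unfolding sound_def le_interp_def by blast
    then show "H1 x = T_R L (snd P) (oplus_i L ?F H1) x" using \<open>x \<in> Head P\<close> by (simp add: restrict_def)
  qed
  have s2: "\<And>x. x \<in> Head P \<Longrightarrow> H2 x \<noteq> ?U \<Longrightarrow> H2 x = T_R L (snd P) (oplus_i L ?F H2) x"
  proof -
    fix x assume "x \<in> Head P" "H2 x \<noteq> ?U"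
    then have "restrict L H2 (Head P) x \<noteq> ?U" by (simp add: restrict_def)
    then have "restrict L H2 (Head P) x = T_R L (snd P) (oplus_i L ?F H2) x"
      using assms(6) unfolding sound_def le_interp_def by blast
    then show "H2 x = T_R L (snd P) (oplus_i L ?F H2) x" using \<open>x \<in> Head P\<close> by (simp add: restrict_def)
  qed
  have "le_interp L (restrict L (oplus_i L H1 H2) (Head P))
          (T_R L (snd P) (oplus_i L ?F (oplus_i L H1 H2)))"
    unfolding le_interp_def
  proof (intro allI impI)
    fix x assume ne: "restrict L (oplus_i L H1 H2) (Head P) x \<noteq> ?U"
    then have hx: "x \<in> Head P" and ne2: "oplus_i L H1 H2 x \<noteq> ?U"
      unfolding restrict_def by (auto split: if_splits)
    show "restrict L (oplus_i L H1 H2) (Head P) x = T_R L (snd P) (oplus_i L ?F (oplus_i L H1 H2)) x"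
    proof (cases "H1 x = ?U")
      case True
      then have e: "oplus_i L H1 H2 x = H2 x" using h12 by simp
      with ne2 have "H2 x \<noteq> ?U" by simp
      with s2 hx have "H2 x = T_R L (snd P) (oplus_i L ?F H2) x" by blast
      moreover have "T_R L (snd P) (oplus_i L ?F (oplus_i L H1 H2)) x = T_R L (snd P) (oplus_i L ?F H2) x"
        using T_R_mono[OF assms(2) mon2] calculation \<open>H2 x \<noteq> ?U\<close> by simp
      ultimately show ?thesis using e hx unfolding restrict_def by simp
    next
      case False
      then have e: "oplus_i L H1 H2 x = H1 x" using h12 by simp
      from s1 hx False have "H1 x = T_R L (snd P) (oplus_i L ?F H1) x" by blast
      moreover have "T_R L (snd P) (oplus_i L ?F (oplus_i L H1 H2)) x = T_R L (snd P) (oplus_i L ?F H1) x"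
        using T_R_mono[OF assms(2) mon1] calculation False by simp
      ultimately show ?thesis using e hx unfolding restrict_def by simp
    qed
  qed
  then show ?thesis using comp unfolding sound_def by simp
qed

end
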